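(* Let $G$ be a simple graph and let $k \geq 1$ be an integer. Then $G$ has a non-empty $k$-core if and only if $\rho_k(G) \geq 1$.
   Context: All graphs are finite, simple and undirected. The $k$-core of a graph $G$ is the maximal subgraph of $G$ in which every vertex has degree at least $k$ within the subgraph (it may be empty; "$G$ has a $k$-core" means it is non-empty, i.e. $G$ has a subgraph of minimum degree at least $k$). For a tensor $\mathcal{A}=(a_{i_1 i_2\cdots i_m})$ of order $m$ and dimension $n$ and $\mathbf{x}\in\mathbb{C}^n$, $\mathcal{A}\mathbf{x}^{m-1}\in\mathbb{C}^n$ has $i$-th component $\sum_{i_2,\ldots,i_m=1}^n a_{i i_2\cdots i_m}x_{i_2}\cdots x_{i_m}$. A complex number $\lambda$ is an eigenvalue of $\mathcal{A}$ if there is a nonzero $\mathbf{x}\in\mathbb{C}^n$ with $\mathcal{A}\mathbf{x}^{m-1}=\lambda\mathbf{x}^{[m-1]}$, where $\mathbf{x}^{[m-1]}=(x_1^{m-1},\ldots,x_n^{m-1})^{\mathrm T}$; $\mathbf{x}$ is then an eigenvector. The spectral radius $\rho(\mathcal{A})$ is the largest modulus of the eigenvalues of $\mathcal{A}$. For a graph $G$ on vertex set $\{1,\ldots,n\}$ with neighborhoods $N_G(i)$, the $k$-adjacency tensor $\mathcal{A}^{(k)}(G)=(a_{i_1 i_2\cdots i_{k+1}})$ is the order-$(k+1)$, dimension-$n$ tensor with $a_{i_1 i_2\cdots i_{k+1}}=1/k!$ if $i_1,\ldots,i_{k+1}$ are pairwise distinct and $\{i_2,\ldots,i_{k+1}\}\subseteq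 N_G(i_1)$, and $0$ otherwise. Equivalently, $(\mathcal{A}^{(k)}(G)\mathbf{x}^k)_i=\sum_{T\subseteq N_G(i),\,|T|=k}\prod_{j\in T}x_j$. Define $\rho_k(G)=\rho(\mathcal{A}^{(k)}(G))$. (For $k=1$ this is the adjacency matrix and its spectral radius.) *)

theory Defs
  imports Complex_Main
begin

definition simple_graph :: "('v::finite \<Rightarrow> 'v \<Rightarrow> bool) \<Rightarrow> bool" where
  "simple_graph E \<longleftrightarrow> (\<forall>u v. E u v \<longleftrightarrow> E v u) \<and> (\<forall>v. \<not> E v v)"

definition nbhd :: "('v \<Rightarrow> 'v \<Rightarrow> bool) \<Rightarrow> 'v \<Rightarrow> 'v set" where
  "nbhd E i = {j. E i j}"

definition has_k_core :: "('v::finite \<Rightarrow> 'v \<Rightarrow> bool) \<Rightarrow> nat \<Rightarrow> bool" where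
  "has_k_core E k \<longleftrightarrow> (\<exists>S. S \<noteq> {} \<and> (\<forall>v\<in>S. card {u\<in>S. E v u} \<ge> k))"

text \<open>A tensor of order m and dimension n = CARD('v): entry a_{i i_2 ... i_m} is
  A i [i_2, ..., i_m].\<close>
type_synonym 'v tensor = "'v \<Rightarrow> 'v list \<Rightarrow> complex"

definition tensor_apply :: "'v::finite tensor \<Rightarrow> nat \<Rightarrow> ('v \<Rightarrow> complex) \<Rightarrow> 'v \<Rightarrow> complex" where
  "tensor_apply A m x i =
     (\<Sum>is\<in>{is. length is = m - 1}. A i is * (\<Prod>j\<leftarrow>is. x j))"

definition tensor_eigenvalue :: "'v::finite tensor \<Rightarrow> nat \<Rightarrow> complex \<Rightarrow> bool" where
  "tensor_eigenvalue A m mu \<longleftrightarrow>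
     (\<exists>x. x \<noteq> (\<lambda>_. 0) \<and> (\<forall>i. tensor_apply A m x i = mu * x i ^ (m - 1)))"

definition tensor_spectral_radius :: "'v::finite tensor \<Rightarrow> nat \<Rightarrow> real" where
  "tensor_spectral_radius A m = Sup {cmod mu | mu. tensor_eigenvalue A m mu}"

definition k_adj_tensor :: "('v::finite \<Rightarrow> 'v \<Rightarrow> bool) \<Rightarrow> nat \<Rightarrow> 'v tensor" where
  "k_adj_tensor E k i is =
     (if distinct (i # is) \<and> set is \<subseteq> nbhd E i then 1 / of_nat (fact k) else 0)"

definition rho_k :: "('v::finite \<Rightarrow> 'v \<Rightarrow> bool) \<Rightarrow> nat \<Rightarrow> real" where
  "rho_k E k = tensor_spectral_radius (k_adj_tensor E k) (k + 1)"

end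

theory Submission
  imports Defs "HOL-Analysis.Analysis"
begin


definition Lset :: "('v::finite \<Rightarrow> 'v \<Rightarrow> bool) \<Rightarrow> nat \<Rightarrow> 'v \<Rightarrow> 'v list set" where
  "Lset E k i = {is. length is = k \<and> distinct (i#is) \<and> set is \<subseteq> nbhd E i}"

definition Pf :: "('v::finite \<Rightarrow> 'v \<Rightarrow> bool) \<Rightarrow> nat \<Rightarrow> 'v \<Rightarrow> real^'v \<Rightarrow> real" where
  "Pf E k i x = (\<Sum>is\<in>Lset E k i. prod_list (map (\<lambda>j. x$j) is)) / fact k"

definition Tf :: "('v::finite \<Rightarrow> 'v \<Rightarrow> bool) \<Rightarrow> nat \<Rightarrow> 'v \<Rightarrow> real^'v \<Rightarrow> real" where
  "Tf E k i x = root k (Pf E k i x)"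

lemma finite_Lset: "finite (Lset E k i)"
proof -
  have "Lset E k i \<subseteq> {is. set is \<subseteq> UNIV \<and> length is = k}" unfolding Lset_def by auto
  moreover have "finite {is::'a list. set is \<subseteq> UNIV \<and> length is = k}"
    by (rule finite_lists_length_eq) simp
  ultimately show ?thesis by (rule finite_subset)
qed

lemma prod_list_of_real: "prod_list (map (\<lambda>j. complex_of_real (f j)) is) = complex_of_real (prod_list (map f is))"
  by (induction "is") auto

lemma tensor_real:
  "tensor_apply (k_adj_tensor E k) (Suc k) (\<lambda>j. complex_of_real (x$j)) i = complex_of_real (Pf E k i x)"
proof -
  have fin: "finite {is::'a list. length is = k}"
    using finite_lists_length_eq[of "UNIV::'a set" k] by simp
  have "tensor_apply (k_adj_tensor E k) (Suc k) (\<lambda>j. complex_of_real (x$j)) i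
     = (\<Sum>is\<in>{is. length is = k}. if is \<in> Lset E k i then complex_of_real (prod_list (map (\<lambda>j. x$j) is) / fact k) else 0)"
    unfolding tensor_apply_def k_adj_tensor_def Lset_def
    by (intro sum.cong refl) (auto simp: prod_list_of_real)
  also have "\<dots> = (\<Sum>is\<in>{is\<in>{is. length is = k}. is \<in> Lset E k i}. complex_of_real (prod_list (map (\<lambda>j. x$j) is) / fact k))"
    by (rule sum.inter_filter[symmetric, OF fin])
  also have "{is\<in>{is. length is = k}. is \<in> Lset E k i} = Lset E k i" unfolding Lset_def by auto
  finally show ?thesis unfolding Pf_def by (simp add: sum_divide_distrib)
qed

lemma prod_list_scale: "length is = k \<Longrightarrow> prod_list (map (\<lambda>j. c * f j) is) = c^k * prod_list (map f is)"
  for f :: "'a \<Rightarrow> real"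
  by (induction "is" arbitrary: k) (auto simp: mult_ac)

lemma prod_list_nonneg: "(\<And>j. 0 \<le> f j) \<Longrightarrow> 0 \<le> prod_list (map f is)"
  for f :: "'a \<Rightarrow> real"
  by (induction "is") auto

lemma prod_list_mono: "(\<And>j. 0 \<le> f j) \<Longrightarrow> (\<And>j. f j \<le> g j) \<Longrightarrow> prod_list (map f is) \<le> prod_list (map g is)"
  for f g :: "'a \<Rightarrow> real"
proof (induction "is")
  case (Cons a as)
  then show ?case by (simp add: mult_mono prod_list_nonneg order_trans[OF Cons.prems(1) Cons.prems(2)])
qed simp

lemma Pf_nonneg: "(\<And>j. 0 \<le> x$j) \<Longrightarrow> 0 \<le> Pf E k i x"
  unfolding Pf_def by (intro divide_nonneg_pos sum_nonneg prod_list_nonneg) auto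

lemma Pf_mono: "(\<And>j. 0 \<le> x$j) \<Longrightarrow> (\<And>j. x$j \<le> y$j) \<Longrightarrow> Pf E k i x \<le> Pf E k i y"
  unfolding Pf_def by (intro divide_right_mono sum_mono prod_list_mono) auto

lemma Pf_scale: "Pf E k i (c *\<^sub>R x) = c^k * Pf E k i x"
proof -
  have "(\<Sum>is\<in>Lset E k i. prod_list (map (\<lambda>j. (c *\<^sub>R x)$j) is)) = (\<Sum>is\<in>Lset E k i. c^k * prod_list (map (\<lambda>j. x$j) is))"
    by (intro sum.cong refl) (auto simp: Lset_def intro: prod_list_scale)
  moreover have "(($) (c *\<^sub>R x)) = (\<lambda>j. c * x$j)" by (rule ext) simp
  ultimately show ?thesis unfolding Pf_def by (simp add: sum_distrib_left)
qed

lemma Tf_nonneg: "(\<And>j. 0 \<le> x$j) \<Longrightarrow> 0 \<le> Tf E k i x"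
  unfolding Tf_def by (simp add: Pf_nonneg real_root_ge_zero)

lemma Tf_mono: "0 < k \<Longrightarrow> (\<And>j. 0 \<le> x$j) \<Longrightarrow> (\<And>j. x$j \<le> y$j) \<Longrightarrow> Tf E k i x \<le> Tf E k i y"
  unfolding Tf_def by (simp add: Pf_mono)

lemma Tf_scale: "0 < k \<Longrightarrow> 0 \<le> c \<Longrightarrow> (\<And>j. 0 \<le> x$j) \<Longrightarrow> Tf E k i (c *\<^sub>R x) = c * Tf E k i x"
  unfolding Tf_def Pf_scale real_root_mult
  by (simp add: real_root_power_cancel)

lemma Tf_pow: "0 < k \<Longrightarrow> (\<And>j. 0 \<le> x$j) \<Longrightarrow> Tf E k i x ^ k = Pf E k i x"
  unfolding Tf_def by (simp add: Pf_nonneg)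

lemma cont_prod_list: "continuous_on S (\<lambda>x::real^'v. prod_list (map (\<lambda>j. x$j) is))"
  by (induction "is") (auto intro!: continuous_intros)

lemma cont_Pf: "continuous_on S (Pf E k i)"
  unfolding Pf_def by (auto intro!: continuous_intros cont_prod_list)

lemma cont_Tf: "continuous_on S (Tf E k i)"
  unfolding Tf_def by (intro continuous_intros cont_Pf)

lemma eig_zero_if_no_core:
  fixes E :: "'v::finite \<Rightarrow> 'v \<Rightarrow> bool"
  assumes nc: "\<not> has_k_core E k" and ev: "tensor_eigenvalue (k_adj_tensor E k) (k+1) mu"
  shows "mu = 0"
proof (rule ccontr)
  assume mu: "mu \<noteq> 0"
  from ev obtain x where x0: "x \<noteq> (\<lambda>_. 0)" and eq: "\<And>i. tensor_apply (k_adj_tensor E k) (k+1) x i = mu * x i ^ k"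
    unfolding tensor_eigenvalue_def by auto
  define U where "U = {i. x i \<noteq> 0}"
  have "U \<noteq> {}" using x0 unfolding U_def by auto
  with nc obtain j where jU: "j \<in> U" and cj: "card {u\<in>U. E j u} < k"
    unfolding has_k_core_def by (auto simp: not_le)
  have "tensor_apply (k_adj_tensor E k) (k+1) x j = 0"
    unfolding tensor_apply_def
  proof (rule sum.neutral, rule ballI)
    fix "is" :: "'v list" assume "is \<in> {is. length is = k + 1 - 1}"
    then have len: "length is = k" by simp
    show "k_adj_tensor E k j is * (\<Prod>j\<leftarrow>is. x j) = 0"
    proof (cases "distinct (j # is) \<and> set is \<subseteq> nbhd E j")
      case True
      have "\<not> set is \<subseteq> U"
      proof
        assume "set is \<subseteq> U"
        then have "set is \<subseteq> {u\<in>U. E j u}" using True unfolding nbhd_def by auto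
        then have "card (set is) \<le> card {u\<in>U. E j u}" by (intro card_mono) auto
        moreover have "card (set is) = k" using True len by (simp add: distinct_card)
        ultimately show False using cj by simp
      qed
      then obtain a where "a \<in> set is" "x a = 0" unfolding U_def by auto
      then have "(\<Prod>j\<leftarrow>is. x j) = 0" by (auto simp: prod_list_zero_iff)
      then show ?thesis by simp
    next
      case False
      then show ?thesis unfolding k_adj_tensor_def by auto
    qed
  qed
  then have "mu * x j ^ k = 0" using eq[of j] by simp
  with mu jU show False unfolding U_def by simp
qed

lemma zero_eig:
  fixes E :: "'v::finite \<Rightarrow> 'v \<Rightarrow> bool"
  assumes sg: "simple_graph E" and nc: "\<not> has_k_core E k"
  shows "tensor_eigenvalue (k_adj_tensor E k) (k+1) 0"
proof -
  from nc obtain v where cv: "card {u\<in>(UNIV::'v set). E v u} < k"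
    unfolding has_k_core_def by (auto simp: not_le)
  define x :: "'v \<Rightarrow> complex" where "x = (\<lambda>j. if j = v then 1 else 0)"
  have x0: "x \<noteq> (\<lambda>_. 0)" unfolding x_def by (auto dest: fun_cong[of _ _ v])
  have "tensor_apply (k_adj_tensor E k) (k+1) x i = 0" for i
    unfolding tensor_apply_def
  proof (rule sum.neutral, rule ballI)
    fix "is" :: "'v list" assume "is \<in> {is. length is = k + 1 - 1}"
    then have len: "length is = k" by simp
    show "k_adj_tensor E k i is * (\<Prod>j\<leftarrow>is. x j) = 0"
    proof (rule ccontr)
      assume ne: "k_adj_tensor E k i is * (\<Prod>j\<leftarrow>is. x j) \<noteq> 0"
      then have T: "distinct (i # is) \<and> set is \<subseteq> nbhd E i" unfolding k_adj_tensor_def by (auto split: if_splits)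
      from ne have "(\<Prod>j\<leftarrow>is. x j) \<noteq> 0" by auto
      then have sv: "set is \<subseteq> {v}" unfolding x_def by (auto simp: prod_list_zero_iff split: if_splits)
      have ck: "card (set is) = k" using T len by (simp add: distinct_card)
      have "card (set is) \<le> 1" using card_mono[OF _ sv] by simp
      have "k \<ge> 1" using cv by simp
      have "set is = {} \<or> set is = {v}" using sv by (rule subset_singletonD)
      moreover have "set is \<noteq> {}" using ck \<open>k \<ge> 1\<close> by auto
      ultimately have "set is = {v}" by blast
      then have "E i v" using T unfolding nbhd_def by auto
      then have "E v i" using sg unfolding simple_graph_def by auto
      then have "{u\<in>(UNIV::'v set). E v u} \<noteq> {}" by auto
      then have "card {u\<in>(UNIV::'v set). E v u} > 0" by (subst card_gt_0_iff) auto
      then show False using cv ck \<open>card (set is) \<le> 1\<close> by simp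
    qed
  qed
  then show ?thesis unfolding tensor_eigenvalue_def using x0 by (intro exI[of _ x]) auto
qed

lemma norm_prod_list_le: "(\<And>j. cmod (x j) \<le> M) \<Longrightarrow> cmod (\<Prod>j\<leftarrow>is. x j) \<le> M ^ length is"
proof (induction "is")
  case (Cons a as)
  have "0 \<le> M" using Cons.prems[of a] norm_ge_zero order_trans by blast
  then show ?case using Cons by (simp add: norm_mult mult_mono)
qed simp

lemma eig_bound:
  fixes E :: "'v::finite \<Rightarrow> 'v \<Rightarrow> bool"
  assumes ev: "tensor_eigenvalue (k_adj_tensor E k) (k+1) mu"
  shows "cmod mu \<le> real (card {is::'v list. length is = k})"
proof -
  from ev obtain x where x0: "x \<noteq> (\<lambda>_. 0)" and eq: "\<And>i. tensor_apply (k_adj_tensor E k) (k+1) x i = mu * x i ^ k"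
    unfolding tensor_eigenvalue_def by auto
  define M where "M = Max (range (\<lambda>i. cmod (x i)))"
  have "M \<in> range (\<lambda>i. cmod (x i))" unfolding M_def by (rule Max_in) auto
  then obtain j where Mj: "M = cmod (x j)" by auto
  have Mi: "cmod (x i) \<le> M" for i unfolding M_def by (rule Max_ge) auto
  obtain i0 where "x i0 \<noteq> 0" using x0 by auto
  then have Mpos: "M > 0" using Mi[of i0] by (meson less_le_trans zero_less_norm_iff)
  have fin: "finite {is::'v list. length is = k}"
    using finite_lists_length_eq[of "UNIV::'v set" k] by simp
  have "cmod mu * M ^ k = cmod (tensor_apply (k_adj_tensor E k) (k+1) x j)"
    using eq[of j] Mj by (simp add: norm_mult norm_power)
  also have "\<dots> \<le> (\<Sum>is\<in>{is. length is = k}. cmod (k_adj_tensor E k j is * (\<Prod>j\<leftarrow>is. x j)))"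
    unfolding tensor_apply_def by (simp add: norm_sum)
  also have "\<dots> \<le> (\<Sum>is\<in>{is::'v list. length is = k}. M ^ k)"
  proof (rule sum_mono)
    fix "is" :: "'v list" assume "is \<in> {is. length is = k}"
    then have len: "length is = k" by simp
    have a: "cmod (k_adj_tensor E k j is) \<le> 1"
      unfolding k_adj_tensor_def by (auto simp: norm_divide)
    have b: "cmod (\<Prod>j\<leftarrow>is. x j) \<le> M ^ k" using norm_prod_list_le[of x M "is", OF Mi] len by simp
    have "cmod (k_adj_tensor E k j is * (\<Prod>j\<leftarrow>is. x j)) \<le> 1 * M ^ k"
      unfolding norm_mult by (rule mult_mono[OF a b]) auto
    then show "cmod (k_adj_tensor E k j is * (\<Prod>j\<leftarrow>is. x j)) \<le> M ^ k" by simp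
  qed
  also have "\<dots> = real (card {is::'v list. length is = k}) * M ^ k" by simp
  finally show ?thesis using Mpos by simp
qed



lemma Pf_core:
  fixes E :: "'v::finite \<Rightarrow> 'v \<Rightarrow> bool"
  assumes sg: "simple_graph E" and jS: "j \<in> S" and deg: "card {w\<in>S. E j w} \<ge> k"
  shows "Pf E k j (\<chi> i. if i \<in> S then 1 else 0) \<ge> 1"
proof -
  define u :: "real^'v" where "u = (\<chi> i. if i \<in> S then 1 else 0)"
  obtain B where B: "B \<subseteq> {w\<in>S. E j w}" "card B = k" "finite B"
    using obtain_subset_with_card_n[OF deg] by blast
  define L where "L = {xs. length xs = k \<and> distinct xs \<and> set xs \<subseteq> B}"
  have cL: "card L = fact k"
    unfolding L_def using card_lists_distinct_length_eq[OF B(3), of k] B(2) by (simp add: fact_prod)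
  have nE: "\<not> E j j" using sg unfolding simple_graph_def by auto
  have LL: "L \<subseteq> Lset E k j"
    unfolding L_def Lset_def nbhd_def using B(1) nE by auto
  have "real (card L) = (\<Sum>is\<in>L. prod_list (map (\<lambda>j. u$j) is))"
  proof -
    have "(\<Sum>is\<in>L. prod_list (map (\<lambda>j. u$j) is)) = (\<Sum>is\<in>L. 1)"
    proof (rule sum.cong[OF refl])
      fix "is" assume "is \<in> L"
      then have "set is \<subseteq> S" unfolding L_def using B(1) by auto
      then have "map (\<lambda>j. u$j) is = map (\<lambda>_. 1) is" unfolding u_def by (intro map_cong) auto
      then show "prod_list (map (\<lambda>j. u$j) is) = 1" by (simp add: map_replicate_const)
    qed
    then show ?thesis by simp
  qed
  also have "\<dots> \<le> (\<Sum>is\<in>Lset E k j. prod_list (map (\<lambda>j. u$j) is))"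
    by (rule sum_mono2[OF finite_Lset LL]) (auto simp: u_def intro!: prod_list_nonneg)
  finally have "fact k \<le> (\<Sum>is\<in>Lset E k j. prod_list (map (\<lambda>j. u$j) is))"
    using cL by simp
  then show ?thesis unfolding u_def[symmetric] Pf_def by simp
qed

definition Dset :: "(real^'v::finite) set" where
  "Dset = {x. (\<forall>i. 0 \<le> x$i) \<and> (\<Sum>i\<in>UNIV. x$i) = 1}"

lemma Dset_props: "compact (Dset::(real^'v::finite) set)" "convex (Dset::(real^'v) set)" "(Dset::(real^'v) set) \<noteq> {}"
proof -
  have "closed {x::real^'v. (\<Sum>i\<in>UNIV. x$i) = 1}"
    by (rule closed_Collect_eq) (auto intro!: continuous_intros)
  then have "closed ({x::real^'v. \<forall>i. 0 \<le> x$i} \<inter> {x::real^'v. (\<Sum>i\<in>UNIV. x$i) = 1})"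
    by (rule closed_Int[OF closed_positive_orthant])
  then have cl: "closed (Dset::(real^'v) set)"
    unfolding Dset_def by (simp add: Collect_conj_eq)
  have "bounded (Dset::(real^'v) set)"
    unfolding bounded_iff
  proof (intro exI ballI)
    fix x :: "real^'v" assume "x \<in> Dset"
    then have "norm x \<le> (\<Sum>i\<in>UNIV. \<bar>x$i\<bar>)" "(\<Sum>i\<in>UNIV. \<bar>x$i\<bar>) = 1"
      using norm_le_l1_cart[of x] unfolding Dset_def by auto
    then show "norm x \<le> 1" by simp
  qed
  with cl show "compact (Dset::(real^'v) set)" by (simp add: compact_eq_bounded_closed)
  show "convex (Dset::(real^'v) set)"
  proof (unfold convex_def, intro ballI allI impI)
    fix x y :: "real^'v" and a b :: real
    assume x: "x \<in> Dset" and y: "y \<in> Dset" and ab: "0 \<le> a" "0 \<le> b" "a + b = 1"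
    have "(\<Sum>i\<in>UNIV. (a *\<^sub>R x + b *\<^sub>R y)$i) = a * (\<Sum>i\<in>UNIV. x$i) + b * (\<Sum>i\<in>UNIV. y$i)"
      by (simp add: sum.distrib sum_distrib_left)
    also have "\<dots> = 1" using x y ab unfolding Dset_def by simp
    finally show "a *\<^sub>R x + b *\<^sub>R y \<in> Dset"
      using x y ab unfolding Dset_def by simp
  qed
  have "(\<chi> i. 1 / real CARD('v)) \<in> (Dset::(real^'v) set)"
    unfolding Dset_def by auto
  then show "(Dset::(real^'v) set) \<noteq> {}" by auto
qed

lemma eps_fixpoint:
  fixes E :: "'v::finite \<Rightarrow> 'v \<Rightarrow> bool"
  assumes sg: "simple_graph E" and k: "k \<ge> 1" and Sne: "S \<noteq> {}"
    and core: "\<forall>v\<in>S. card {u\<in>S. E v u} \<ge> k" and eps: "\<epsilon> > 0"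
  shows "\<exists>x\<in>Dset. \<exists>\<mu>. \<mu> > 1 \<and> \<mu> = (\<Sum>j\<in>UNIV. Tf E k j x) + \<epsilon> * real (card S) \<and>
            (\<forall>i. Tf E k i x + \<epsilon> * (if i \<in> S then 1 else 0) = \<mu> * x$i)"
proof -
  define uu :: "'v \<Rightarrow> real" where "uu i = (if i \<in> S then 1 else 0)" for i
  define c where "c = real (card S)"
  have cpos: "c > 0" unfolding c_def using Sne by (simp add: card_gt_0_iff)
  have sumuu: "(\<Sum>i\<in>UNIV. uu i) = c" unfolding uu_def c_def by (simp add: sum.If_cases)
  define den where "den x = (\<Sum>j\<in>UNIV. Tf E k j x) + \<epsilon> * c" for x
  define \<Phi> :: "real^'v \<Rightarrow> real^'v" where "\<Phi> x = (\<chi> i. (Tf E k i x + \<epsilon> * uu i) / den x)" for x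
  have nnD: "\<And>(x::real^'v) j. x \<in> Dset \<Longrightarrow> 0 \<le> x$j" unfolding Dset_def by auto
  have Tnn: "\<And>(x::real^'v) i. x \<in> Dset \<Longrightarrow> 0 \<le> Tf E k i x" by (rule Tf_nonneg) (rule nnD)
  have denpos: "\<And>(x::real^'v). x \<in> Dset \<Longrightarrow> den x > 0"
    unfolding den_def using cpos eps by (intro add_nonneg_pos sum_nonneg Tnn) auto
  have cont: "continuous_on Dset \<Phi>"
    unfolding \<Phi>_def den_def
    by (intro continuous_on_vec_lambda continuous_on_divide continuous_on_add continuous_on_sum
        cont_Tf continuous_on_const ballI) (use denpos[unfolded den_def] in \<open>auto simp: less_le\<close>)
  have maps: "\<Phi> \<in> Dset \<rightarrow> Dset"
  proof
    fix x :: "real^'v" assume x: "x \<in> Dset"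
    have "(\<Sum>i\<in>UNIV. \<Phi> x $ i) = (\<Sum>i\<in>UNIV. Tf E k i x + \<epsilon> * uu i) / den x"
      unfolding \<Phi>_def by (simp add: sum_divide_distrib)
    also have "\<dots> = 1" using denpos[OF x] unfolding den_def
      by (simp add: sum.distrib sum_distrib_left[symmetric] sumuu)
    finally show "\<Phi> x \<in> Dset" unfolding Dset_def
      using denpos[OF x] Tnn[OF x] eps by (auto simp: \<Phi>_def uu_def)
  qed
  obtain x where xD: "x \<in> Dset" and fx: "\<Phi> x = x"
    using brouwer[OF Dset_props cont maps] by blast
  define \<mu> where "\<mu> = den x"
  have mupos: "\<mu> > 0" unfolding \<mu>_def using denpos[OF xD] .
  have eq: "Tf E k i x + \<epsilon> * uu i = \<mu> * x$i" for i
  proof -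
    have "x$i = \<Phi> x $ i" using fx by simp
    also have "\<dots> = (Tf E k i x + \<epsilon> * uu i) / \<mu>" unfolding \<Phi>_def \<mu>_def by simp
    finally have "x$i = (Tf E k i x + \<epsilon> * uu i) / \<mu>" .
    then show ?thesis using mupos by (simp add: field_simps)
  qed
  have xpos: "x$j > 0" if "j \<in> S" for j
  proof -
    have "\<mu> * x$j \<ge> \<epsilon>" using eq[of j] Tnn[OF xD, of j] that unfolding uu_def by simp
    then have "\<mu> * x$j > 0" using eps by simp
    then show ?thesis using mupos by (simp add: zero_less_mult_iff)
  qed
  define t where "t = Min ((\<lambda>j. x$j) ` S)"
  have "t \<in> (\<lambda>j. x$j) ` S" unfolding t_def using Sne by (intro Min_in) auto
  then obtain j0 where j0: "j0 \<in> S" "x$j0 = t" by auto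
  have tpos: "t > 0" using xpos j0 by auto
  have tle: "t \<le> x$j" if "j \<in> S" for j unfolding t_def using that by (intro Min_le) auto
  define uvec :: "real^'v" where "uvec = (\<chi> i. if i \<in> S then 1 else 0)"
  have "Tf E k j0 (t *\<^sub>R uvec) \<le> Tf E k j0 x"
    by (rule Tf_mono) (use k tpos tle nnD[OF xD] in \<open>auto simp: uvec_def\<close>)
  moreover have "Tf E k j0 (t *\<^sub>R uvec) = t * Tf E k j0 uvec"
    by (rule Tf_scale) (use k tpos in \<open>auto simp: uvec_def\<close>)
  moreover have T1: "Tf E k j0 uvec \<ge> 1"
  proof -
    have "Pf E k j0 uvec \<ge> 1" unfolding uvec_def using Pf_core[OF sg j0(1)] core j0(1) by blast
    then have "root k 1 \<le> root k (Pf E k j0 uvec)" using k by simp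
    then show ?thesis unfolding Tf_def using k by simp
  qed
  moreover have "t * 1 \<le> t * Tf E k j0 uvec" using T1 tpos by (intro mult_left_mono) auto
  ultimately have "t \<le> Tf E k j0 x" by simp
  then have "\<mu> * t \<ge> t + \<epsilon>" using eq[of j0] j0 unfolding uu_def by simp
  then have "\<mu> * t > 1 * t" using eps by simp
  then have "\<mu> > 1" using tpos by (simp only: mult_less_cancel_right)
  moreover have "\<mu> = (\<Sum>j\<in>UNIV. Tf E k j x) + \<epsilon> * real (card S)" unfolding \<mu>_def den_def c_def ..
  ultimately show ?thesis using xD eq unfolding uu_def by blast
qed

lemma core_eig:
  fixes E :: "'v::finite \<Rightarrow> 'v \<Rightarrow> bool"
  assumes sg: "simple_graph E" and k: "k \<ge> 1" and hc: "has_k_core E k"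
  shows "\<exists>mu. tensor_eigenvalue (k_adj_tensor E k) (k+1) mu \<and> cmod mu \<ge> 1"
proof -
  from hc obtain S where Sne: "S \<noteq> {}" and core: "\<forall>v\<in>S. card {u\<in>S. E v u} \<ge> k"
    unfolding has_k_core_def by blast
  define c where "c = real (card S)"
  have cpos: "c > 0" unfolding c_def using Sne by (simp add: card_gt_0_iff)
  define s where "s x = (\<Sum>j\<in>UNIV. Tf E k j x)" for x :: "real^'v"
  define h where "h x = (\<Sum>i\<in>UNIV. \<bar>Tf E k i x - s x * x$i\<bar>) + max 0 (1 - s x)" for x :: "real^'v"
  have hnn: "h x \<ge> 0" for x unfolding h_def by (intro add_nonneg_nonneg sum_nonneg) auto
  have conth: "continuous_on Dset h"
    unfolding h_def s_def by (intro continuous_intros cont_Tf)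
  obtain x0 where x0D: "x0 \<in> (Dset::(real^'v) set)" and x0min: "\<forall>y\<in>Dset. h x0 \<le> h y"
    using continuous_attains_inf[OF Dset_props(1) Dset_props(3) conth] by blast
  have small: "h x0 \<le> 3 * c * \<epsilon>" if eps: "\<epsilon> > 0" for \<epsilon>
  proof -
    obtain x \<mu> where xD: "x \<in> Dset" and mu1: "\<mu> > 1" and mus: "\<mu> = s x + \<epsilon> * c"
      and eq: "\<And>i. Tf E k i x + \<epsilon> * (if i \<in> S then 1 else 0) = \<mu> * x$i"
      using eps_fixpoint[OF sg k Sne core eps] unfolding s_def c_def by blast
    have nn: "0 \<le> x$i" for i using xD unfolding Dset_def by auto
    have sx1: "(\<Sum>i\<in>UNIV. x$i) = 1" using xD unfolding Dset_def by auto
    have "(\<Sum>i\<in>UNIV. \<bar>Tf E k i x - s x * x$i\<bar>) \<le> (\<Sum>i\<in>UNIV. \<epsilon> * (c * x$i + (if i \<in> S then 1 else 0)))"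
    proof (rule sum_mono)
      fix i
      have "Tf E k i x - s x * x$i = \<epsilon> * (c * x$i - (if i \<in> S then 1 else 0))"
        using eq[of i] mus by (simp add: algebra_simps)
      then show "\<bar>Tf E k i x - s x * x$i\<bar> \<le> \<epsilon> * (c * x$i + (if i \<in> S then 1 else 0))"
        using eps cpos nn[of i] mult_nonneg_nonneg[of c "x$i"] by (auto simp: abs_mult abs_le_iff)
    qed
    also have "\<dots> = \<epsilon> * (c * 1 + c)"
      by (simp add: sum.distrib sum_distrib_left[symmetric] sx1 sum.If_cases c_def)
    finally have A: "(\<Sum>i\<in>UNIV. \<bar>Tf E k i x - s x * x$i\<bar>) \<le> 2 * c * \<epsilon>" by (simp add: algebra_simps)
    have B: "max 0 (1 - s x) \<le> c * \<epsilon>" using mu1 mus eps cpos by (auto simp: mult.commute)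
    have "h x \<le> 3 * c * \<epsilon>" unfolding h_def using A B by (simp add: max_def)
    then show ?thesis using x0min xD by force
  qed
  have h0: "h x0 \<le> 0"
  proof (rule field_le_epsilon)
    fix e :: real assume e: "e > 0"
    show "h x0 \<le> 0 + e" using small[of "e / (3 * c)"] e cpos by simp
  qed
  have A0: "(\<Sum>i\<in>UNIV. \<bar>Tf E k i x0 - s x0 * x0$i\<bar>) = 0" and B0: "1 - s x0 \<le> 0"
  proof -
    have P: "(\<Sum>i\<in>UNIV. \<bar>Tf E k i x0 - s x0 * x0$i\<bar>) \<ge> 0" by (intro sum_nonneg) auto
    show "(\<Sum>i\<in>UNIV. \<bar>Tf E k i x0 - s x0 * x0$i\<bar>) = 0" using h0 P unfolding h_def by linarith
    show "1 - s x0 \<le> 0" using h0 P unfolding h_def by linarith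
  qed
  have Teq: "Tf E k i x0 = s x0 * x0$i" for i
    using A0 sum_nonneg_eq_0_iff[of UNIV "\<lambda>i. \<bar>Tf E k i x0 - s x0 * x0$i\<bar>"] by auto
  have s1: "s x0 \<ge> 1" using B0 by simp
  have nn0: "0 \<le> x0$i" for i using x0D unfolding Dset_def by auto
  define y where "y = (\<lambda>j. complex_of_real (x0$j))"
  have y0: "y \<noteq> (\<lambda>_. 0)"
  proof
    assume "y = (\<lambda>_. 0)"
    then have "\<forall>j. x0$j = 0" unfolding y_def by (metis of_real_eq_0_iff)
    then show False using x0D unfolding Dset_def by simp
  qed
  have "tensor_apply (k_adj_tensor E k) (k+1) y i = complex_of_real (s x0 ^ k) * y i ^ (k + 1 - 1)" for i
  proof -
    have "tensor_apply (k_adj_tensor E k) (k+1) y i = complex_of_real (Pf E k i x0)"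
      using tensor_real[of E k x0 i] unfolding y_def by simp
    also have "Pf E k i x0 = Tf E k i x0 ^ k" using Tf_pow[of k x0 E i] k nn0 by simp
    also have "\<dots> = s x0 ^ k * x0$i ^ k" by (simp add: Teq power_mult_distrib)
    finally show ?thesis unfolding y_def by simp
  qed
  then have "tensor_eigenvalue (k_adj_tensor E k) (k+1) (complex_of_real (s x0 ^ k))"
    unfolding tensor_eigenvalue_def using y0 by blast
  moreover have "cmod (complex_of_real (s x0 ^ k)) \<ge> 1" using s1 by (simp add: norm_power)
  ultimately show ?thesis by blast
qed

theorem theorem3p1:
  fixes E :: "'v::finite \<Rightarrow> 'v \<Rightarrow> bool" and k :: nat
  assumes "simple_graph E" and "k \<ge> 1"
  shows "has_k_core E k \<longleftrightarrow> rho_k E k \<ge> 1"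
proof -
  define X where "X = {cmod mu | mu. tensor_eigenvalue (k_adj_tensor E k) (k + 1) mu}"
  have rho: "rho_k E k = Sup X" unfolding rho_k_def tensor_spectral_radius_def X_def ..
  have bdd: "bdd_above X" unfolding X_def bdd_above_def using eig_bound[of E k] by blast
  show ?thesis
  proof
    assume hc: "has_k_core E k"
    obtain mu where "tensor_eigenvalue (k_adj_tensor E k) (k+1) mu" "cmod mu \<ge> 1"
      using core_eig[OF assms hc] by blast
    then have "cmod mu \<le> Sup X" using bdd unfolding X_def by (intro cSup_upper) auto
    then show "rho_k E k \<ge> 1" using rho \<open>cmod mu \<ge> 1\<close> by simp
  next
    assume r: "rho_k E k \<ge> 1"
    show "has_k_core E k"
    proof (rule ccontr)
      assume nc: "\<not> has_k_core E k"
      have "X = {0}"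
        unfolding X_def using eig_zero_if_no_core[OF nc] zero_eig[OF assms(1) nc] by auto
      then show False using r rho by simp
    qed
  qed
qed

end
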